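(* Let $U$ be a finite set, $(T,I,N)$ an IMTL triplet, $\widetilde{R}$ a $T$-preorder relation on $U$, and $A\subseteq U$ a crisp set (identified with its indicator fuzzy set), $coA=U\setminus A$. Let $L:\mathbb{R}\times\mathbb{R}\to\mathbb{R}^+$ be a loss function that is of $\lor$-type, $N$-duality preserving and symmetric. Consider problem (P1): $$\text{minimize }\sum_{u\in U}L(A(u),\hat{A}(u))\ \text{ s.t. } T(\widetilde{R}(u,v),\hat{A}(v))\le\hat{A}(u)\ (u,v\in U),\ 0\le\hat{A}(u)\le1,$$ and problem (P2) in variables $(\beta_u)_{u\in U}$: $$\text{minimize }\sum_{u\in U}L(1,\beta_u)\ \text{ s.t. } T(\beta_u,\beta_v)\le N(\widetilde{R}(v,u))\ (u\in A,\ v\in coA),\ 0\le\beta_u\le1\ (u\in U).$$ Under the correspondence $\beta_u=\hat{A}(u)$ for $u\in A$ and $\beta_u=N(\hat{A}(u))$ for $u\in coA$, problems (P1) and (P2) are equivalent: they have the same optimal value, and $\hat{A}$ is an optimal solution of (P1) if and only if the corresponding $\beta$ is an optimal solution of (P2).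
   Context: A residual triplet $(T,I,N)$ consists of a left-continuous $t$-norm $T$, its residual implicator $I(x,y)=\sup\{\beta\in[0,1]: T(x,\beta)\le y\}$ and $N(x)=I(x,0)$; it is IMTL if $N$ is involutive. $\widetilde{R}:U\times U\to[0,1]$ is a $T$-preorder if reflexive and $T$-transitive. A loss function $L$ is of $\lor$-type if for every real $a$: $L(a,a)=0$; $x\mapsto L(x,a)$ and $x\mapsto L(a,x)$ are increasing for $x>a$ and decreasing for $x<a$. $L$ is symmetric if $L(y,\hat y)=L(\hat y,y)$, and $N$-duality preserving if $L(y,\hat y)=L(N(\hat y),N(y))$ for all $y,\hat y\in[0,1]$. *)

theory Defs
  imports Complex_Main
begin

definition t_norm :: "(real \<Rightarrow> real \<Rightarrow> real) \<Rightarrow> bool" where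
  "t_norm T \<longleftrightarrow>
     (\<forall>x\<in>{0..1}. \<forall>y\<in>{0..1}. T x y \<in> {0..1}) \<and>
     (\<forall>x\<in>{0..1}. \<forall>y\<in>{0..1}. T x y = T y x) \<and>
     (\<forall>x\<in>{0..1}. \<forall>y\<in>{0..1}. \<forall>z\<in>{0..1}. T (T x y) z = T x (T y z)) \<and>
     (\<forall>x\<in>{0..1}. \<forall>y\<in>{0..1}. \<forall>z\<in>{0..1}. y \<le> z \<longrightarrow> T x y \<le> T x z) \<and>
     (\<forall>x\<in>{0..1}. T x 1 = x)"

text \<open>Left-continuity (in the first argument; by commutativity in both).\<close>
definition left_continuous_t_norm :: "(real \<Rightarrow> real \<Rightarrow> real) \<Rightarrow> bool" where
  "left_continuous_t_norm T \<longleftrightarrow> t_norm T \<and>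
     (\<forall>y\<in>{0..1}. \<forall>x\<in>{0<..1}. ((\<lambda>z. T z y) \<longlongrightarrow> T x y) (at_left x))"

definition residual_implicator :: "(real \<Rightarrow> real \<Rightarrow> real) \<Rightarrow> real \<Rightarrow> real \<Rightarrow> real" where
  "residual_implicator T x y = Sup {\<beta> \<in> {0..1}. T x \<beta> \<le> y}"

definition residual_negation :: "(real \<Rightarrow> real \<Rightarrow> real) \<Rightarrow> real \<Rightarrow> real" where
  "residual_negation T x = residual_implicator T x 0"

text \<open>The residual triplet (T, I, N) determined by T is IMTL iff N is involutive.\<close>
definition IMTL_triplet :: "(real \<Rightarrow> real \<Rightarrow> real) \<Rightarrow> bool" where
  "IMTL_triplet T \<longleftrightarrow> left_continuous_t_norm T \<and>
     (\<forall>x\<in>{0..1}. residual_negation T (residual_negation T x) = x)"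

definition T_preorder :: "(real \<Rightarrow> real \<Rightarrow> real) \<Rightarrow> 'a set \<Rightarrow> ('a \<Rightarrow> 'a \<Rightarrow> real) \<Rightarrow> bool" where
  "T_preorder T U R \<longleftrightarrow>
     (\<forall>u\<in>U. \<forall>v\<in>U. R u v \<in> {0..1}) \<and>
     (\<forall>u\<in>U. R u u = 1) \<and>
     (\<forall>u\<in>U. \<forall>v\<in>U. \<forall>w\<in>U. T (R u v) (R v w) \<le> R u w)"

definition lor_type_loss :: "(real \<Rightarrow> real \<Rightarrow> real) \<Rightarrow> bool" where
  "lor_type_loss L \<longleftrightarrow>
     (\<forall>a. L a a = 0) \<and>
     (\<forall>a. strict_mono_on {a<..} (\<lambda>x. L x a) \<and> strict_antimono_on {..<a} (\<lambda>x. L x a)) \<and>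
     (\<forall>a. strict_mono_on {a<..} (\<lambda>x. L a x) \<and> strict_antimono_on {..<a} (\<lambda>x. L a x))"

definition symmetric_loss :: "(real \<Rightarrow> real \<Rightarrow> real) \<Rightarrow> bool" where
  "symmetric_loss L \<longleftrightarrow> (\<forall>y yh. L y yh = L yh y)"

definition duality_preserving_loss :: "(real \<Rightarrow> real) \<Rightarrow> (real \<Rightarrow> real \<Rightarrow> real) \<Rightarrow> bool" where
  "duality_preserving_loss N L \<longleftrightarrow>
     (\<forall>y\<in>{0..1}. \<forall>yh\<in>{0..1}. L y yh = L (N yh) (N y))"

definition crisp :: "'a set \<Rightarrow> 'a \<Rightarrow> real" where
  "crisp A u = (if u \<in> A then 1 else 0)"

definition feasible_P1 :: "(real \<Rightarrow> real \<Rightarrow> real) \<Rightarrow> 'a set \<Rightarrow> ('a \<Rightarrow> 'a \<Rightarrow> real) \<Rightarrow> ('a \<Rightarrow> real) \<Rightarrow> bool" where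
  "feasible_P1 T U R Ah \<longleftrightarrow>
     (\<forall>u\<in>U. \<forall>v\<in>U. T (R u v) (Ah v) \<le> Ah u) \<and> (\<forall>u\<in>U. 0 \<le> Ah u \<and> Ah u \<le> 1)"

definition obj_P1 :: "(real \<Rightarrow> real \<Rightarrow> real) \<Rightarrow> 'a set \<Rightarrow> 'a set \<Rightarrow> ('a \<Rightarrow> real) \<Rightarrow> real" where
  "obj_P1 L U A Ah = (\<Sum>u\<in>U. L (crisp A u) (Ah u))"

definition optimal_P1 where
  "optimal_P1 T L U R A Ah \<longleftrightarrow> feasible_P1 T U R Ah \<and>
     (\<forall>Ah'. feasible_P1 T U R Ah' \<longrightarrow> obj_P1 L U A Ah \<le> obj_P1 L U A Ah')"

definition value_P1 where
  "value_P1 T L U R A = Inf (obj_P1 L U A ` {Ah. feasible_P1 T U R Ah})"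

definition feasible_P2 :: "(real \<Rightarrow> real \<Rightarrow> real) \<Rightarrow> 'a set \<Rightarrow> ('a \<Rightarrow> 'a \<Rightarrow> real) \<Rightarrow> 'a set \<Rightarrow> ('a \<Rightarrow> real) \<Rightarrow> bool" where
  "feasible_P2 T U R A b \<longleftrightarrow>
     (\<forall>u\<in>A. \<forall>v\<in>U - A. T (b u) (b v) \<le> residual_negation T (R v u)) \<and>
     (\<forall>u\<in>U. 0 \<le> b u \<and> b u \<le> 1)"

definition obj_P2 :: "(real \<Rightarrow> real \<Rightarrow> real) \<Rightarrow> 'a set \<Rightarrow> ('a \<Rightarrow> real) \<Rightarrow> real" where
  "obj_P2 L U b = (\<Sum>u\<in>U. L 1 (b u))"

definition optimal_P2 where
  "optimal_P2 T L U R A b \<longleftrightarrow> feasible_P2 T U R A b \<and>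
     (\<forall>b'. feasible_P2 T U R A b' \<longrightarrow> obj_P2 L U b \<le> obj_P2 L U b')"

definition value_P2 where
  "value_P2 T L U R A = Inf (obj_P2 L U ` {b. feasible_P2 T U R A b})"

definition corr :: "(real \<Rightarrow> real \<Rightarrow> real) \<Rightarrow> 'a set \<Rightarrow> ('a \<Rightarrow> real) \<Rightarrow> 'a \<Rightarrow> real" where
  "corr T A Ah u = (if u \<in> A then Ah u else residual_negation T (Ah u))"

end

theory Submission
  imports Defs
begin
locale imtl = fixes T :: "real \<Rightarrow> real \<Rightarrow> real" assumes imtl: "IMTL_triplet T"
begin

lemma tn: "t_norm T" using imtl unfolding IMTL_triplet_def left_continuous_t_norm_def by blast

lemma rng: "x \<in> {0..1} \<Longrightarrow> y \<in> {0..1} \<Longrightarrow> T x y \<in> {0..1}"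
  using tn unfolding t_norm_def by blast
lemma comm: "x \<in> {0..1} \<Longrightarrow> y \<in> {0..1} \<Longrightarrow> T x y = T y x"
  using tn unfolding t_norm_def by blast
lemma assoc: "x \<in> {0..1} \<Longrightarrow> y \<in> {0..1} \<Longrightarrow> z \<in> {0..1} \<Longrightarrow> T (T x y) z = T x (T y z)"
  using tn unfolding t_norm_def by blast
lemma monoR: "x \<in> {0..1} \<Longrightarrow> y \<in> {0..1} \<Longrightarrow> z \<in> {0..1} \<Longrightarrow> y \<le> z \<Longrightarrow> T x y \<le> T x z"
  using tn unfolding t_norm_def by blast
lemma monoL: "x \<in> {0..1} \<Longrightarrow> y \<in> {0..1} \<Longrightarrow> z \<in> {0..1} \<Longrightarrow> y \<le> z \<Longrightarrow> T y x \<le> T z x"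
  using monoR comm by metis
lemma one1: "x \<in> {0..1} \<Longrightarrow> T x 1 = x"
  using tn unfolding t_norm_def by blast
lemma one2: "x \<in> {0..1} \<Longrightarrow> T 1 x = x"
  using one1 comm by (metis atLeastAtMost_iff order_refl zero_le_one)
lemma zero2: "x \<in> {0..1} \<Longrightarrow> T 0 x = 0"
proof -
  assume x: "x \<in> {0..1}"
  have "T 0 x \<le> T 0 1" using monoR[of 0 x 1] x by auto
  moreover have "T 0 1 = 0" using one1[of 0] by auto
  moreover have "T 0 x \<ge> 0" using rng[of 0 x] x by auto
  ultimately show ?thesis by linarith
qed
lemma zero1: "x \<in> {0..1} \<Longrightarrow> T x 0 = 0"
  using zero2 comm by (metis atLeastAtMost_iff order_refl zero_le_one)

lemma lc: "y \<in> {0..1} \<Longrightarrow> x \<in> {0<..1} \<Longrightarrow> ((\<lambda>z. T z y) \<longlongrightarrow> T x y) (at_left x)"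
  using imtl unfolding IMTL_triplet_def left_continuous_t_norm_def by blast

lemma I_props:
  assumes x: "x \<in> {0..1}" and z: "z \<in> {0..1}"
  shows "residual_implicator T x z \<in> {0..1}" "T x (residual_implicator T x z) \<le> z"
    "\<And>y. y \<in> {0..1} \<Longrightarrow> T x y \<le> z \<Longrightarrow> y \<le> residual_implicator T x z"
proof -
  define S where "S = {\<beta> \<in> {0..1}. T x \<beta> \<le> z}"
  have I: "residual_implicator T x z = Sup S" unfolding S_def residual_implicator_def by simp
  have S0: "0 \<in> S" unfolding S_def using zero1 x z by auto
  have bdd: "bdd_above S" unfolding S_def by (auto intro: bdd_aboveI[of _ 1])
  have s0: "0 \<le> Sup S" using cSup_upper[OF S0 bdd] .
  have Sne: "S \<noteq> {}" using S0 by auto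
  have s1: "Sup S \<le> 1" by (rule cSup_least[OF Sne]) (auto simp: S_def)
  show "residual_implicator T x z \<in> {0..1}" using I s0 s1 by simp
  show "\<And>y. y \<in> {0..1} \<Longrightarrow> T x y \<le> z \<Longrightarrow> y \<le> residual_implicator T x z"
    using I bdd by (auto intro!: cSup_upper simp: S_def)
  show "T x (residual_implicator T x z) \<le> z"
  proof (cases "Sup S = 0")
    case True then show ?thesis using I zero1 x z by auto
  next
    case False
    then have sp: "Sup S > 0" using s0 by linarith
    have below: "T x b \<le> z" if "0 < b" "b < Sup S" for b
    proof -
      obtain c where c: "c \<in> S" "b < c" using less_cSupD[OF _ \<open>b < Sup S\<close>] S0 by blast
      have "T x b \<le> T x c" using c that x by (intro monoR) (auto simp: S_def)
      also have "\<dots> \<le> z" using c by (auto simp: S_def)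
      finally show ?thesis .
    qed
    have lim: "((\<lambda>b. T b x) \<longlongrightarrow> T (Sup S) x) (at_left (Sup S))"
      using lc[of x "Sup S"] x sp s1 by auto
    have ev: "eventually (\<lambda>b. T b x \<le> z) (at_left (Sup S))"
      using eventually_at_left_real[OF sp]
      by eventually_elim (metis below comm x greaterThanLessThan_iff atLeastAtMost_iff less_eq_real_def s1 order.trans)
    have "T (Sup S) x \<le> z" using tendsto_upperbound[OF lim ev] by simp
    then show ?thesis using I comm x s0 s1 by auto
  qed
qed

lemma resid: "x \<in> {0..1} \<Longrightarrow> y \<in> {0..1} \<Longrightarrow> z \<in> {0..1} \<Longrightarrow>
   T x y \<le> z \<longleftrightarrow> y \<le> residual_implicator T x z"
proof
  assume a: "x \<in> {0..1}" "y \<in> {0..1}" "z \<in> {0..1}" "y \<le> residual_implicator T x z"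
  have "T x y \<le> T x (residual_implicator T x z)" using a I_props(1)[of x z] by (intro monoR) auto
  then show "T x y \<le> z" using I_props(2)[of x z] a by linarith
qed (use I_props(3) in auto)

abbreviation "N \<equiv> residual_negation T"

lemma N_rng: "x \<in> {0..1} \<Longrightarrow> N x \<in> {0..1}"
  unfolding residual_negation_def using I_props(1)[of x 0] by auto

lemma N_inv: "x \<in> {0..1} \<Longrightarrow> N (N x) = x"
  using imtl unfolding IMTL_triplet_def by blast

lemma N_le: "a \<in> {0..1} \<Longrightarrow> z \<in> {0..1} \<Longrightarrow> z \<le> N a \<longleftrightarrow> T a z \<le> 0"
  unfolding residual_negation_def using resid[of a z 0] by auto

lemma N_anti: "x \<in> {0..1} \<Longrightarrow> y \<in> {0..1} \<Longrightarrow> N y \<le> N x \<longleftrightarrow> x \<le> y"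
proof -
  assume x: "x \<in> {0..1}" and y: "y \<in> {0..1}"
  have "N y \<le> N x \<longleftrightarrow> T x (N y) \<le> 0" using N_le[of x "N y"] x y N_rng by auto
  also have "\<dots> \<longleftrightarrow> T (N y) x \<le> 0" using comm x y N_rng by auto
  also have "\<dots> \<longleftrightarrow> x \<le> N (N y)" using N_le[of "N y" x] x y N_rng by auto
  finally show ?thesis using N_inv y by simp
qed

lemma N1: "N 1 = 0"
proof -
  have "N 1 \<le> N 1" by simp
  then have "T 1 (N 1) \<le> 0" using N_le[of 1 "N 1"] N_rng[of 1] by auto
  then have "N 1 \<le> 0" using one2 N_rng[of 1] by auto
  then show ?thesis using N_rng[of 1] by auto
qed

lemma cross:
  assumes "p \<in> {0..1}" "q \<in> {0..1}" "r \<in> {0..1}"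
  shows "T p (N q) \<le> N r \<longleftrightarrow> T r p \<le> q"
proof -
  have Nq: "N q \<in> {0..1}" using N_rng assms by auto
  have Trp: "T r p \<in> {0..1}" using rng assms by auto
  have "T p (N q) \<le> N r \<longleftrightarrow> T r (T p (N q)) \<le> 0" using N_le[of r "T p (N q)"] rng Nq assms by auto
  also have "\<dots> \<longleftrightarrow> T (T r p) (N q) \<le> 0" using assoc assms Nq by auto
  also have "\<dots> \<longleftrightarrow> N q \<le> N (T r p)" using N_le[of "T r p" "N q"] Trp Nq by auto
  also have "\<dots> \<longleftrightarrow> T r p \<le> q" using N_anti Trp assms by auto
  finally show ?thesis .
qed

end
locale prob = imtl T for T +
  fixes U A :: "'a set" and R :: "'a \<Rightarrow> 'a \<Rightarrow> real" and L :: "real \<Rightarrow> real \<Rightarrow> real"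
  assumes finU: "finite U"
    and pre: "T_preorder T U R"
    and AU: "A \<subseteq> U"
    and Lnn: "\<forall>x y. L x y \<ge> 0"
    and lor: "lor_type_loss L"
    and dual: "duality_preserving_loss (residual_negation T) L"
    and sym: "symmetric_loss L"
begin

lemma R_rng: "u \<in> U \<Longrightarrow> v \<in> U \<Longrightarrow> R u v \<in> {0..1}" using pre unfolding T_preorder_def by blast
lemma R_refl: "u \<in> U \<Longrightarrow> R u u = 1" using pre unfolding T_preorder_def by blast
lemma R_trans: "u \<in> U \<Longrightarrow> v \<in> U \<Longrightarrow> w \<in> U \<Longrightarrow> T (R u v) (R v w) \<le> R u w"
  using pre unfolding T_preorder_def by blast

lemma L1_strict: "0 \<le> a \<Longrightarrow> a < b \<Longrightarrow> b \<le> 1 \<Longrightarrow> L 1 b < L 1 a"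
proof -
  assume a: "0 \<le> a" "a < b" "b \<le> 1"
  have am: "strict_antimono_on {..<1} (\<lambda>x. L 1 x)" using lor unfolding lor_type_loss_def by blast
  show ?thesis
  proof (cases "b < 1")
    case True then show ?thesis using am a unfolding monotone_on_def by auto
  next
    case False
    then have b1: "b = 1" using a by auto
    have "L 1 ((a+1)/2) < L 1 a" using am a b1 unfolding monotone_on_def by auto
    moreover have "L 1 ((a+1)/2) \<ge> 0" using Lnn by auto
    moreover have "L 1 1 = 0" using lor unfolding lor_type_loss_def by blast
    ultimately show ?thesis unfolding b1 by linarith
  qed
qed

lemma L0_strict: "0 \<le> b \<Longrightarrow> b < a \<Longrightarrow> L 0 b < L 0 a"
proof -
  assume a: "0 \<le> b" "b < a"
  have am: "strict_mono_on {0<..} (\<lambda>x. L 0 x)" using lor unfolding lor_type_loss_def by blast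
  show ?thesis
  proof (cases "0 < b")
    case True then show ?thesis using am a unfolding monotone_on_def by auto
  next
    case False
    then have b0: "b = 0" using a by auto
    have "L 0 (a/2) < L 0 a" using am a b0 unfolding monotone_on_def by auto
    moreover have "L 0 (a/2) \<ge> 0" using Lnn by auto
    moreover have "L 0 0 = 0" using lor unfolding lor_type_loss_def by blast
    ultimately show ?thesis unfolding b0 by linarith
  qed
qed

definition "inr Ah \<longleftrightarrow> (\<forall>u\<in>U. 0 \<le> Ah u \<and> Ah u \<le> 1)"

lemma corr_feas:
  assumes "inr Ah"
  shows "feasible_P2 T U R A (corr T A Ah) \<longleftrightarrow>
     (\<forall>u\<in>A. \<forall>v\<in>U - A. T (R v u) (Ah u) \<le> Ah v)"
proof -
  have c: "\<forall>u\<in>U. 0 \<le> corr T A Ah u \<and> corr T A Ah u \<le> 1"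
    using assms N_rng unfolding inr_def corr_def by auto
  have "(T (corr T A Ah u) (corr T A Ah v) \<le> N (R v u)) \<longleftrightarrow> T (R v u) (Ah u) \<le> Ah v"
    if "u \<in> A" "v \<in> U - A" for u v
    using cross[of "Ah u" "Ah v" "R v u"] that assms AU R_rng unfolding inr_def corr_def by auto
  then show ?thesis using c unfolding feasible_P2_def by auto
qed

lemma corr_obj:
  assumes "inr Ah"
  shows "obj_P2 L U (corr T A Ah) = obj_P1 L U A Ah"
  unfolding obj_P2_def obj_P1_def
proof (rule sum.cong)
  fix u assume u: "u \<in> U"
  show "L 1 (corr T A Ah u) = L (crisp A u) (Ah u)"
  proof (cases "u \<in> A")
    case True then show ?thesis by (simp add: corr_def crisp_def)
  next
    case False
    have r: "Ah u \<in> {0..1}" using assms u unfolding inr_def by auto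
    have "L 1 (N (Ah u)) = L (N (N (Ah u))) (N 1)"
      using dual N_rng[OF r] unfolding duality_preserving_loss_def by auto
    also have "\<dots> = L (Ah u) 0" using N_inv[OF r] N1 by simp
    also have "\<dots> = L 0 (Ah u)" using sym unfolding symmetric_loss_def by auto
    finally show ?thesis using False by (simp add: corr_def crisp_def)
  qed
qed simp

lemma feas1_inr: "feasible_P1 T U R Ah \<Longrightarrow> inr Ah"
  unfolding feasible_P1_def inr_def by auto

lemma feas1_feas2: "feasible_P1 T U R Ah \<Longrightarrow> feasible_P2 T U R A (corr T A Ah)"
  using corr_feas[OF feas1_inr] AU unfolding feasible_P1_def by blast

lemma feas2_inv:
  assumes "feasible_P2 T U R A b"
  obtains Ah where "inr Ah" "\<forall>u\<in>U. corr T A Ah u = b u"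
proof -
  define Ah where "Ah u = (if u \<in> A then b u else N (b u))" for u
  have "inr Ah" using assms N_rng unfolding Ah_def inr_def feasible_P2_def by auto
  moreover have "\<forall>u\<in>U. corr T A Ah u = b u"
    using assms N_inv unfolding Ah_def corr_def feasible_P2_def by auto
  ultimately show ?thesis using that by blast
qed

lemma feas2_cong: "\<forall>u\<in>U. b u = b' u \<Longrightarrow> feasible_P2 T U R A b \<longleftrightarrow> feasible_P2 T U R A b'"
proof -
  assume e: "\<forall>u\<in>U. b u = b' u"
  have "\<forall>u\<in>A. \<forall>v\<in>U - A. T (b u) (b v) = T (b' u) (b' v)" using e AU by auto
  then show ?thesis unfolding feasible_P2_def using e by auto
qed
lemma obj2_cong: "\<forall>u\<in>U. b u = b' u \<Longrightarrow> obj_P2 L U b = obj_P2 L U b'"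
  unfolding obj_P2_def by simp

definition "clo Ah x = Max (insert 0 ((\<lambda>w. T (R x w) (Ah w)) ` A))"

lemma clo:
  assumes inr: "inr Ah" and f2: "feasible_P2 T U R A (corr T A Ah)"
  shows "feasible_P1 T U R (clo Ah)"
    "obj_P1 L U A (clo Ah) \<le> obj_P1 L U A Ah"
    "obj_P1 L U A (clo Ah) = obj_P1 L U A Ah \<Longrightarrow> feasible_P1 T U R Ah"
proof -
  have finA: "finite A" using finU AU finite_subset by blast
  have fin: "finite (insert 0 ((\<lambda>w. T (R x w) (Ah w)) ` A))" for x using finA by simp
  have Ahr: "u \<in> U \<Longrightarrow> Ah u \<in> {0..1}" for u using inr unfolding inr_def by auto
  have elr: "x \<in> U \<Longrightarrow> w \<in> A \<Longrightarrow> T (R x w) (Ah w) \<in> {0..1}" for x w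
    using rng R_rng Ahr AU by blast
  have cr: "clo Ah x \<in> {0..1}" if x: "x \<in> U" for x
  proof -
    have "0 \<le> clo Ah x" unfolding clo_def using fin by (simp add: Max_ge_iff)
    moreover have "clo Ah x \<le> 1" unfolding clo_def using fin elr[OF x] by (auto simp: Max_le_iff)
    ultimately show ?thesis by simp
  qed
  have geA: "Ah x \<le> clo Ah x" if "x \<in> A" for x
  proof -
    have "T (R x x) (Ah x) \<le> clo Ah x" unfolding clo_def using fin that by (intro Max_ge) auto
    then show ?thesis using R_refl one2 Ahr that AU by auto
  qed
  have cross2: "\<forall>u\<in>A. \<forall>v\<in>U - A. T (R v u) (Ah u) \<le> Ah v" using corr_feas[OF inr] f2 by blast
  have leC: "clo Ah x \<le> Ah x" if "x \<in> U - A" for x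
    unfolding clo_def using fin cross2 that Ahr by (auto simp: Max_le_iff)
  show F: "feasible_P1 T U R (clo Ah)"
    unfolding feasible_P1_def
  proof (intro conjI ballI)
    fix u v assume u: "u \<in> U" and v: "v \<in> U"
    have "clo Ah v \<in> insert 0 ((\<lambda>w. T (R v w) (Ah w)) ` A)" unfolding clo_def using fin by (intro Max_in) auto
    then show "T (R u v) (clo Ah v) \<le> clo Ah u"
    proof
      assume "clo Ah v = 0"
      then show ?thesis using zero1 R_rng u v cr[OF u] by auto
    next
      assume "clo Ah v \<in> (\<lambda>w. T (R v w) (Ah w)) ` A"
      then obtain w where w: "w \<in> A" "clo Ah v = T (R v w) (Ah w)" by auto
      have wU: "w \<in> U" using w AU by auto
      have "T (R u v) (clo Ah v) = T (T (R u v) (R v w)) (Ah w)"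
        using w assoc R_rng u v wU Ahr by auto
      also have "\<dots> \<le> T (R u w) (Ah w)"
        using monoL R_trans[OF u v wU] R_rng u v wU Ahr rng by auto
      also have "\<dots> \<le> clo Ah u" unfolding clo_def using fin w by (intro Max_ge) auto
      finally show ?thesis .
    qed
  next
    fix u assume "u \<in> U" then show "0 \<le> clo Ah u" using cr by auto
  next
    fix u assume "u \<in> U" then show "clo Ah u \<le> 1" using cr by auto
  qed
  have term_le: "L (crisp A u) (clo Ah u) \<le> L (crisp A u) (Ah u)" if u: "u \<in> U" for u
  proof (cases "u \<in> A")
    case True
    then show ?thesis using geA[OF True] cr[OF u] Ahr[OF u] L1_strict[of "Ah u" "clo Ah u"]
      by (cases "Ah u = clo Ah u") (auto simp: crisp_def)
  next
    case False
    then show ?thesis using leC[of u] u cr[OF u] L0_strict[of "clo Ah u" "Ah u"]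
      by (cases "Ah u = clo Ah u") (auto simp: crisp_def)
  qed
  show "obj_P1 L U A (clo Ah) \<le> obj_P1 L U A Ah"
    unfolding obj_P1_def by (rule sum_mono) (use term_le in auto)
  assume eq: "obj_P1 L U A (clo Ah) = obj_P1 L U A Ah"
  have same: "clo Ah u = Ah u" if u: "u \<in> U" for u
  proof (rule ccontr)
    assume ne: "clo Ah u \<noteq> Ah u"
    have "L (crisp A u) (clo Ah u) < L (crisp A u) (Ah u)"
    proof (cases "u \<in> A")
      case True
      then show ?thesis using geA[OF True] cr[OF u] Ahr[OF u] L1_strict[of "Ah u" "clo Ah u"] ne
        by (auto simp: crisp_def)
    next
      case False
      then show ?thesis using leC[of u] u cr[OF u] L0_strict[of "clo Ah u" "Ah u"] ne
        by (auto simp: crisp_def)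
    qed
    then have "obj_P1 L U A (clo Ah) < obj_P1 L U A Ah"
      unfolding obj_P1_def using finU term_le u by (intro sum_strict_mono_ex1) auto
    then show False using eq by simp
  qed
  show "feasible_P1 T U R Ah" using F same unfolding feasible_P1_def by auto
qed

lemma main:
  shows "value_P1 T L U R A = value_P2 T L U R A \<and>
         (\<forall>Ah. (\<forall>u\<in>U. 0 \<le> Ah u \<and> Ah u \<le> 1) \<longrightarrow>
            (optimal_P1 T L U R A Ah \<longleftrightarrow> optimal_P2 T L U R A (corr T A Ah)))"
proof (intro conjI allI impI)
  have dom: "\<exists>Ah. feasible_P1 T U R Ah \<and> obj_P1 L U A Ah \<le> obj_P2 L U b"
    if b: "feasible_P2 T U R A b" for b
  proof -
    obtain Ah where Ah: "inr Ah" "\<forall>u\<in>U. corr T A Ah u = b u" using feas2_inv[OF b] by blast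
    have f2: "feasible_P2 T U R A (corr T A Ah)" using feas2_cong[OF Ah(2)] b by simp
    have "obj_P2 L U b = obj_P1 L U A Ah" using obj2_cong[OF Ah(2)] corr_obj[OF Ah(1)] by simp
    then show ?thesis using clo[OF Ah(1) f2] by auto
  qed
  define S1 where "S1 = obj_P1 L U A ` {Ah. feasible_P1 T U R Ah}"
  define S2 where "S2 = obj_P2 L U ` {b. feasible_P2 T U R A b}"
  have f0: "feasible_P1 T U R (\<lambda>_. 0)" unfolding feasible_P1_def using zero1 R_rng by auto
  have S1ne: "S1 \<noteq> {}" using f0 unfolding S1_def by auto
  have S12: "S1 \<subseteq> S2" unfolding S1_def S2_def
  proof
    fix s assume "s \<in> obj_P1 L U A ` {Ah. feasible_P1 T U R Ah}"
    then obtain Ah where "feasible_P1 T U R Ah" "s = obj_P1 L U A Ah" by auto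
    then show "s \<in> obj_P2 L U ` {b. feasible_P2 T U R A b}"
      using feas1_feas2 corr_obj[OF feas1_inr] by (metis (mono_tags) image_eqI mem_Collect_eq)
  qed
  have bdd2: "bdd_below S2" unfolding S2_def obj_P2_def using Lnn
    by (intro bdd_belowI[of _ 0]) (auto intro: sum_nonneg)
  have bdd1: "bdd_below S1" using bdd2 S12 by (meson bdd_below_mono)
  have "Inf S2 \<le> Inf S1" using cInf_superset_mono[OF S1ne bdd2 S12] .
  moreover have "Inf S1 \<le> Inf S2"
  proof (rule cInf_greatest)
    show "S2 \<noteq> {}" using S1ne S12 by auto
    fix s assume "s \<in> S2"
    then obtain b where b: "feasible_P2 T U R A b" "s = obj_P2 L U b" unfolding S2_def by auto
    obtain Ah where "feasible_P1 T U R Ah" "obj_P1 L U A Ah \<le> s" using dom[OF b(1)] b(2) by auto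
    then show "Inf S1 \<le> s" using cInf_lower[OF _ bdd1, of "obj_P1 L U A Ah"] unfolding S1_def by force
  qed
  ultimately show "value_P1 T L U R A = value_P2 T L U R A"
    unfolding value_P1_def value_P2_def S1_def S2_def by simp
  fix Ah :: "'a \<Rightarrow> real" assume "\<forall>u\<in>U. 0 \<le> Ah u \<and> Ah u \<le> 1"
  then have inr: "inr Ah" unfolding inr_def by simp
  show "optimal_P1 T L U R A Ah \<longleftrightarrow> optimal_P2 T L U R A (corr T A Ah)"
  proof
    assume o: "optimal_P1 T L U R A Ah"
    show "optimal_P2 T L U R A (corr T A Ah)" unfolding optimal_P2_def
    proof (intro conjI allI impI)
      show "feasible_P2 T U R A (corr T A Ah)" using o feas1_feas2 unfolding optimal_P1_def by blast
      fix b' assume "feasible_P2 T U R A b'"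
      then obtain Ah2 where "feasible_P1 T U R Ah2" "obj_P1 L U A Ah2 \<le> obj_P2 L U b'" using dom by blast
      then show "obj_P2 L U (corr T A Ah) \<le> obj_P2 L U b'"
        using o corr_obj[OF inr] unfolding optimal_P1_def by force
    qed
  next
    assume o: "optimal_P2 T L U R A (corr T A Ah)"
    have f2: "feasible_P2 T U R A (corr T A Ah)" using o unfolding optimal_P2_def by blast
    have c1: "feasible_P1 T U R (clo Ah)" using clo(1)[OF inr f2] .
    have "obj_P2 L U (corr T A Ah) \<le> obj_P2 L U (corr T A (clo Ah))"
      using o feas1_feas2[OF c1] unfolding optimal_P2_def by blast
    then have "obj_P1 L U A Ah \<le> obj_P1 L U A (clo Ah)"
      using corr_obj[OF inr] corr_obj[OF feas1_inr[OF c1]] by simp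
    then have "obj_P1 L U A (clo Ah) = obj_P1 L U A Ah" using clo(2)[OF inr f2] by linarith
    then have f1: "feasible_P1 T U R Ah" using clo(3)[OF inr f2] by blast
    show "optimal_P1 T L U R A Ah" unfolding optimal_P1_def
    proof (intro conjI allI impI f1)
      fix Ah' assume a: "feasible_P1 T U R Ah'"
      then show "obj_P1 L U A Ah \<le> obj_P1 L U A Ah'"
        using o feas1_feas2[OF a] corr_obj[OF inr] corr_obj[OF feas1_inr[OF a]]
        unfolding optimal_P2_def by metis
    qed
  qed
qed

end
theorem proposition8:
  fixes U A :: "'a set" and T :: "real \<Rightarrow> real \<Rightarrow> real"
    and R :: "'a \<Rightarrow> 'a \<Rightarrow> real" and L :: "real \<Rightarrow> real \<Rightarrow> real"
  assumes "finite U"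
    and "IMTL_triplet T"
    and "T_preorder T U R"
    and "A \<subseteq> U"
    and "\<forall>x y. L x y \<ge> 0"
    and "lor_type_loss L"
    and "duality_preserving_loss (residual_negation T) L"
    and "symmetric_loss L"
  shows "value_P1 T L U R A = value_P2 T L U R A \<and>
         (\<forall>Ah. (\<forall>u\<in>U. 0 \<le> Ah u \<and> Ah u \<le> 1) \<longrightarrow>
            (optimal_P1 T L U R A Ah \<longleftrightarrow> optimal_P2 T L U R A (corr T A Ah)))"
proof -
  interpret prob T U A R L
    using assms by (unfold_locales) auto
  show ?thesis by (rule main)
qed

end
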